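(* Let $\theta\in[0,1]$, and define the stability function and its inverse by $$\mathcal{R}_{\theta}(z)=\frac{1+(1-\theta)z}{1-\theta z},\qquad \mathcal{R}_{\theta}^{-1}(w)=\frac{1-w}{\theta(1-w)-1}.$$ Let $\sigma:\mathbb{R}\to\mathbb{R}$ be a differentiable activation function with $|\sigma|:=\sup_{t}|\sigma'(t)|\in(0,\infty)$. For weight matrices $\gamma_1,\dots,\gamma_n$ (nonzero, of compatible sizes, with $\gamma_1$ having $d$ columns and $\gamma_n$ having $d$ rows) and bias vectors $b_1,\dots,b_n$, set $\tilde{\gamma}_i=\gamma_i/(|\sigma|\,\|\gamma_i\|)$ where $\|\cdot\|$ is the spectral norm, and define the spectrally normalized network $\tilde F(\gamma,x)=\phi_n\circ\cdots\circ\phi_1(x)$ on $\mathbb{R}^d$, where $\phi_i(x)=\sigma(\tilde{\gamma}_i x+b_i)$ with $\sigma$ applied elementwise. Let $S(t)=1/(1+e^{-t})$ be the sigmoid function, let $\gamma_c,\gamma_L\in\mathbb{R}$ be arbitrary scalar parameters, and set $$c:=\mathcal{R}_{\theta}^{-1}\big(1-S(\gamma_c)\big),\qquad r:=\max\Big(0,\ \mathcal{R}_{\theta}^{-1}\big(1-S(\gamma_L)\big)-c\Big),$$ $$F(\gamma,x):=c\,x+r\,\tilde F(\gamma,x).$$ Then the residual layer $y=x+F(\gamma,(1-\theta)x+\theta y)$ is dissipative, i.e., for every $x\in\mathbb{R}^d$, every eigenvalue $\lambda$ of the Jacobian $D_xF(\gamma,x)$ satisfies $|\mathcal{R}_{\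theta}(\lambda)|<1$.
   Context: An implicit residual layer with vector field $F(\gamma,\cdot):\mathbb{R}^d\to\mathbb{R}^d$ and parameter $\theta$ maps $x$ to $y$ defined by $y=x+F(\gamma,(1-\theta)x+\theta y)$. Its stability function is $\mathcal{R}_{\theta}(z)=\frac{1+(1-\theta)z}{1-\theta z}$ for $z\in\mathbb{C}$, and its stability region is the set $\{z\in\mathbb{C}:|\mathcal{R}_{\theta}(z)|<1\}$. The layer is called dissipative if, at every point $x$, all eigenvalues of the Jacobian $D_xF(\gamma,x)$ lie in the stability region. *)

theory Defs
  imports "HOL-Analysis.Analysis"
begin

definition stab :: "real \<Rightarrow> complex \<Rightarrow> complex" where
  "stab \<theta> z = (1 + complex_of_real (1 - \<theta>) * z) / (1 - complex_of_real \<theta> * z)"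

definition stab_inv :: "real \<Rightarrow> real \<Rightarrow> real" where
  "stab_inv \<theta> w = (1 - w) / (\<theta> * (1 - w) - 1)"

definition sigmoid :: "real \<Rightarrow> real" where
  "sigmoid t = 1 / (1 + exp (- t))"

text \<open>Finite-dimensional vectors of varying dimension are represented as
  functions nat => real (only the first k entries matter); a m x k matrix as
  nat => nat => real (entries (i,j) with i<m, j<k).\<close>

definition vnorm :: "nat \<Rightarrow> (nat \<Rightarrow> real) \<Rightarrow> real" where
  "vnorm k v = sqrt (\<Sum>j<k. (v j)^2)"

definition matvec :: "nat \<Rightarrow> nat \<Rightarrow> (nat \<Rightarrow> nat \<Rightarrow> real) \<Rightarrow> (nat \<Rightarrow> real) \<Rightarrow> (nat \<Rightarrow> real)" where
  "matvec m k G v = (\<lambda>i. if i < m then (\<Sum>j<k. G i j * v j) else 0)"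

definition spec_norm :: "nat \<Rightarrow> nat \<Rightarrow> (nat \<Rightarrow> nat \<Rightarrow> real) \<Rightarrow> real" where
  "spec_norm m k G = Sup {vnorm m (matvec m k G v) | v. vnorm k v \<le> 1}"

definition nonzero_mat :: "nat \<Rightarrow> nat \<Rightarrow> (nat \<Rightarrow> nat \<Rightarrow> real) \<Rightarrow> bool" where
  "nonzero_mat m k G \<longleftrightarrow> (\<exists>i<m. \<exists>j<k. G i j \<noteq> 0)"

text \<open>A layer is (m, k, G, b): G is an m x k weight matrix, b a bias vector of length m.
  Spectrally normalised layer: x |-> sigma(G x / (|sigma| ||G||) + b), elementwise.\<close>
type_synonym layer = "nat \<times> nat \<times> (nat \<Rightarrow> nat \<Rightarrow> real) \<times> (nat \<Rightarrow> real)"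

definition sn_layer :: "(real \<Rightarrow> real) \<Rightarrow> real \<Rightarrow> layer \<Rightarrow> (nat \<Rightarrow> real) \<Rightarrow> (nat \<Rightarrow> real)" where
  "sn_layer \<sigma> s L v = (case L of (m, k, G, b) \<Rightarrow>
     (\<lambda>i. if i < m then \<sigma> ((\<Sum>j<k. (G i j / (s * spec_norm m k G)) * v j) + b i) else 0))"

fun net_apply :: "(real \<Rightarrow> real) \<Rightarrow> real \<Rightarrow> layer list \<Rightarrow> (nat \<Rightarrow> real) \<Rightarrow> (nat \<Rightarrow> real)" where
  "net_apply \<sigma> s [] v = v"
| "net_apply \<sigma> s (L # Ls) v = net_apply \<sigma> s Ls (sn_layer \<sigma> s L v)"

definition wf_net :: "nat \<Rightarrow> layer list \<Rightarrow> bool" where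
  "wf_net d Ls \<longleftrightarrow> Ls \<noteq> [] \<and>
     fst (snd (hd Ls)) = d \<and> fst (last Ls) = d \<and>
     (\<forall>i. Suc i < length Ls \<longrightarrow> fst (snd (Ls ! Suc i)) = fst (Ls ! i)) \<and>
     (\<forall>L\<in>set Ls. case L of (m, k, G, b) \<Rightarrow> nonzero_mat m k G)"

definition coord :: "nat \<Rightarrow> 'd::finite" where
  "coord = (SOME f. bij_betw f {..<CARD('d)} (UNIV :: 'd set))"

definition to_fun :: "real ^ 'd::finite \<Rightarrow> (nat \<Rightarrow> real)" where
  "to_fun x = (\<lambda>i. if i < CARD('d) then x $ coord i else 0)"

definition of_fun :: "(nat \<Rightarrow> real) \<Rightarrow> real ^ 'd::finite" where
  "of_fun v = (\<chi> j. v (inv_into {..<CARD('d)} coord j))"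

definition Ftilde :: "(real \<Rightarrow> real) \<Rightarrow> real \<Rightarrow> layer list \<Rightarrow> real ^ 'd::finite \<Rightarrow> real ^ 'd" where
  "Ftilde \<sigma> s Ls x = of_fun (net_apply \<sigma> s Ls (to_fun x))"

definition is_eigenvalue :: "real ^ 'n ^ 'n \<Rightarrow> complex \<Rightarrow> bool" where
  "is_eigenvalue A mu \<longleftrightarrow>
     (\<exists>v :: complex ^ 'n. v \<noteq> 0 \<and> (\<chi> i j. complex_of_real (A $ i $ j)) *v v = mu *s v)"

end

theory Submission
  imports Defs
begin


lemma region_real:
  fixes \<theta> c r x y :: real
  assumes "0 \<le> \<theta>" "\<theta> \<le> 1" "(x - c)^2 + y^2 \<le> r^2" "r \<ge> 0"
    "c + r < 0" "2*(c-r) + (1-2*\<theta>)*(c-r)^2 < 0" "2*(c+r) + (1-2*\<theta>)*(c+r)^2 < 0"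
  shows "2*x + (1-2*\<theta>)*(x^2+y^2) < 0"
proof (cases "1 - 2*\<theta> \<ge> 0")
  case True
  have xr: "c - r \<le> x" "x \<le> c + r"
    proof -
    have "y^2 \<ge> 0" by simp
    hence "(x - c)^2 \<le> r^2" using assms(3) by linarith
    hence "\<bar>x - c\<bar>^2 \<le> r^2" by simp
    hence "\<bar>x - c\<bar> \<le> r" using assms(4) power2_le_imp_le by blast
    thus "c - r \<le> x" "x \<le> c + r" by auto
  qed
  have "(1-2*\<theta>)*(x^2+y^2) \<le> (1-2*\<theta>)*(x^2 + r^2 - (x-c)^2)"
    using True assms(3) by (intro mult_left_mono) auto
  moreover have "2*x + (1-2*\<theta>)*(x^2 + r^2 - (x-c)^2) < 0"
  proof -
    define t where "t = (x - (c - r)) / (2*r)"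
    show ?thesis
    proof (cases "r = 0")
      case True thus ?thesis using xr assms by (smt (verit))
    next
      case False
      hence r: "r > 0" using assms by auto
      have t01: "0 \<le> t" "t \<le> 1" using xr r by (auto simp: t_def field_simps)
      have xt: "x = (1-t)*(c-r) + t*(c+r)" using r by (simp add: t_def field_simps)
      have "2*x + (1-2*\<theta>)*(x^2 + r^2 - (x-c)^2) = (1-t)*(2*(c-r) + (1-2*\<theta>)*(c-r)^2) + t*(2*(c+r) + (1-2*\<theta>)*(c+r)^2)"
        unfolding xt by (simp add: algebra_simps power2_eq_square)
      also have "\<dots> < 0"
      proof -
        have "(1-t)*(2*(c-r) + (1-2*\<theta>)*(c-r)^2) \<le> 0" using t01 assms(6) by (simp add: mult_nonneg_nonpos)
        moreover have "t*(2*(c+r) + (1-2*\<theta>)*(c+r)^2) \<le> 0" using t01 assms(7) by (simp add: mult_nonneg_nonpos)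
        moreover have "(1-t) > 0 \<or> t > 0" using t01 by auto
        ultimately show ?thesis using assms(6,7) by (smt (verit) mult_pos_neg)
      qed
      finally show ?thesis .
    qed
  qed
  ultimately show ?thesis by linarith
next
  case False
  have "x \<le> c + r"
    proof -
    have "y^2 \<ge> 0" by simp
    hence "(x - c)^2 \<le> r^2" using assms(3) by linarith
    hence "\<bar>x - c\<bar>^2 \<le> r^2" by simp
    hence "\<bar>x - c\<bar> \<le> r" using assms(4) power2_le_imp_le by blast
    thus ?thesis by auto
  qed
  hence "x < 0" using assms by linarith
  have "(1-2*\<theta>)*(x^2+y^2) \<le> (1-2*\<theta>)*x^2" using False by (intro mult_left_mono_neg) auto
  moreover have "(1-2*\<theta>)*x^2 \<le> 0" using False by (simp add: mult_nonpos_nonneg)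
  ultimately show ?thesis using \<open>x<0\<close> by linarith
qed

lemma stab_lt1:
  assumes "0 \<le> \<theta>" "\<theta> \<le> 1" "2 * Re \<mu> + (1-2*\<theta>)*((Re \<mu>)^2 + (Im \<mu>)^2) < 0"
  shows "cmod (stab \<theta> \<mu>) < 1"
proof (cases "1 - complex_of_real \<theta> * \<mu> = 0")
  case True thus ?thesis by (simp add: stab_def)
next
  case False
  have "(cmod (1 + complex_of_real (1 - \<theta>) * \<mu>))^2 < (cmod (1 - complex_of_real \<theta> * \<mu>))^2"
    unfolding cmod_power2 using assms(3) by (simp add: algebra_simps power2_eq_square)
  hence "cmod (1 + complex_of_real (1 - \<theta>) * \<mu>) < cmod (1 - complex_of_real \<theta> * \<mu>)"
    using power2_less_imp_less norm_ge_zero by blast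
  thus ?thesis using False by (simp add: stab_def norm_divide divide_less_eq)
qed
lemma vnorm_nonneg: "vnorm k v \<ge> 0"
  unfolding vnorm_def by (simp add: sum_nonneg)

lemma vnorm_scale: "vnorm k (\<lambda>j. a * v j) = \<bar>a\<bar> * vnorm k v"
proof -
  have "(\<Sum>j<k. (a * v j)^2) = a^2 * (\<Sum>j<k. (v j)^2)"
    by (simp add: power_mult_distrib sum_distrib_left)
  thus ?thesis unfolding vnorm_def by (simp add: real_sqrt_mult)
qed

lemma matvec_scale: "matvec m k G (\<lambda>j. a * v j) = (\<lambda>i. a * matvec m k G v i)"
  unfolding matvec_def by (auto simp: sum_distrib_left algebra_simps)

lemma matvec_frob:
  "vnorm m (matvec m k G v) \<le> sqrt (\<Sum>i<m. \<Sum>j<k. (G i j)^2) * vnorm k v"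
proof -
  have "(\<Sum>i<m. (matvec m k G v i)^2) \<le> (\<Sum>i<m. (\<Sum>j<k. (G i j)^2) * (\<Sum>j<k. (v j)^2))"
    by (intro sum_mono) (simp add: matvec_def Cauchy_Schwarz_ineq_sum)
  also have "\<dots> = (\<Sum>i<m. \<Sum>j<k. (G i j)^2) * (\<Sum>j<k. (v j)^2)"
    by (simp add: sum_distrib_right)
  finally have "sqrt (\<Sum>i<m. (matvec m k G v i)^2) \<le> sqrt ((\<Sum>i<m. \<Sum>j<k. (G i j)^2) * (\<Sum>j<k. (v j)^2))"
    by simp
  thus ?thesis unfolding vnorm_def by (simp add: real_sqrt_mult)
qed

lemma vnorm_zero: "vnorm k v = 0 \<Longrightarrow> j < k \<Longrightarrow> v j = 0"
  unfolding vnorm_def by (simp add: sum_nonneg_eq_0_iff)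

lemma spec_bdd: "bdd_above {vnorm m (matvec m k G v) | v. vnorm k v \<le> 1}"
proof -
  have "\<forall>x\<in>{vnorm m (matvec m k G v) | v. vnorm k v \<le> 1}. x \<le> sqrt (\<Sum>i<m. \<Sum>j<k. (G i j)^2)"
  proof safe
    fix v assume "vnorm k v \<le> 1"
    have "vnorm m (matvec m k G v) \<le> sqrt (\<Sum>i<m. \<Sum>j<k. (G i j)^2) * vnorm k v" by (rule matvec_frob)
    also have "\<dots> \<le> sqrt (\<Sum>i<m. \<Sum>j<k. (G i j)^2) * 1"
      using \<open>vnorm k v \<le> 1\<close> by (intro mult_left_mono) (auto simp: sum_nonneg)
    finally show "vnorm m (matvec m k G v) \<le> sqrt (\<Sum>i<m. \<Sum>j<k. (G i j)^2)" by simp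
  qed
  thus ?thesis unfolding bdd_above_def by blast
qed

lemma spec_norm_bound: "vnorm m (matvec m k G v) \<le> spec_norm m k G * vnorm k v"
proof (cases "vnorm k v = 0")
  case True
  hence "matvec m k G v = (\<lambda>i. 0)" unfolding matvec_def using vnorm_zero[OF True] by auto
  hence "vnorm m (matvec m k G v) = 0" by (simp add: vnorm_def)
  thus ?thesis using True by simp
next
  case False
  hence pos: "vnorm k v > 0" using vnorm_nonneg[of k v] by linarith
  define a where "a = 1 / vnorm k v"
  have "vnorm k (\<lambda>j. a * v j) = \<bar>a\<bar> * vnorm k v" by (rule vnorm_scale)
  hence "vnorm k (\<lambda>j. a * v j) = 1" using pos by (simp add: a_def)
  hence "vnorm m (matvec m k G (\<lambda>j. a * v j)) \<le> spec_norm m k G"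
    unfolding spec_norm_def by (intro cSup_upper spec_bdd) auto
  moreover have "vnorm m (matvec m k G (\<lambda>j. a * v j)) = \<bar>a\<bar> * vnorm m (matvec m k G v)"
    unfolding matvec_scale by (rule vnorm_scale)
  ultimately have "a * vnorm m (matvec m k G v) \<le> spec_norm m k G"
    using pos by (simp add: a_def)
  thus ?thesis using pos by (simp add: a_def field_simps)
qed

lemma spec_norm_pos: assumes "nonzero_mat m k G" shows "spec_norm m k G > 0"
proof -
  obtain i j where ij: "i < m" "j < k" "G i j \<noteq> 0" using assms unfolding nonzero_mat_def by auto
  define e where "e = (\<lambda>l. if l = j then (1::real) else 0)"
  have "(\<lambda>l. (e l)^2) = e" by (auto simp: e_def fun_eq_iff)
  hence "(\<Sum>l<k. (e l)^2) = (\<Sum>l<k. e l)" by metis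
  also have "\<dots> = 1" using ij(2) by (simp add: e_def)
  finally have "(\<Sum>l<k. (e l)^2) = 1" .
  hence e1: "vnorm k e = 1" by (simp add: vnorm_def)
  have me: "matvec m k G e i = G i j" using ij unfolding matvec_def e_def by (simp add: if_distrib sum.delta cong: if_cong)
  have "(G i j)^2 \<le> (\<Sum>l<m. (matvec m k G e l)^2)"
    using ij(1) me member_le_sum[of i "{..<m}" "\<lambda>l. (matvec m k G e l)^2"] by simp
  hence "sqrt ((G i j)^2) \<le> vnorm m (matvec m k G e)" unfolding vnorm_def by (rule real_sqrt_le_mono)
  hence "0 < vnorm m (matvec m k G e)" using ij(3) by simp
  also have "vnorm m (matvec m k G e) \<le> spec_norm m k G"
    unfolding spec_norm_def using e1 by (intro cSup_upper spec_bdd) auto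
  finally show ?thesis .
qed

lemma sigma_lip:
  fixes \<sigma> :: "real \<Rightarrow> real"
  assumes "\<forall>t. \<sigma> differentiable (at t)" "bdd_above (range (\<lambda>t. \<bar>deriv \<sigma> t\<bar>))"
  shows "\<bar>\<sigma> a - \<sigma> b\<bar> \<le> (SUP t. \<bar>deriv \<sigma> t\<bar>) * \<bar>a - b\<bar>"
proof -
  have D: "\<And>x. (\<sigma> has_real_derivative deriv \<sigma> x) (at x)"
    using assms(1) DERIV_deriv_iff_real_differentiable by blast
  have B: "\<And>z. \<bar>deriv \<sigma> z\<bar> \<le> (SUP t. \<bar>deriv \<sigma> t\<bar>)"
    using assms(2) by (intro cSUP_upper) auto
  have *: "\<bar>\<sigma> q - \<sigma> p\<bar> \<le> (SUP t. \<bar>deriv \<sigma> t\<bar>) * \<bar>q - p\<bar>" if pq: "p < q" for p q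
  proof -
    obtain z where "\<sigma> q - \<sigma> p = (q - p) * deriv \<sigma> z"
      using MVT2[OF pq, of \<sigma> "deriv \<sigma>"] D by blast
    hence "\<bar>\<sigma> q - \<sigma> p\<bar> = \<bar>q - p\<bar> * \<bar>deriv \<sigma> z\<bar>" by (simp add: abs_mult)
    also have "\<dots> \<le> \<bar>q - p\<bar> * (SUP t. \<bar>deriv \<sigma> t\<bar>)" using B by (intro mult_left_mono) auto
    finally show ?thesis by (simp add: mult.commute)
  qed
  show ?thesis
  proof (cases a b rule: linorder_cases)
    case less thus ?thesis using *[OF less] by (simp add: abs_minus_commute)
  next
    case greater thus ?thesis using *[OF greater] by simp
  qed simp
qed

lemma layer_lip:
  fixes \<sigma> :: "real \<Rightarrow> real"
  assumes s: "s > 0" and lip: "\<And>a b. \<bar>\<sigma> a - \<sigma> b\<bar> \<le> s * \<bar>a - b\<bar>" and nz: "nonzero_mat m k G"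
  shows "vnorm m (\<lambda>i. sn_layer \<sigma> s (m,k,G,b) v i - sn_layer \<sigma> s (m,k,G,b) w i) \<le> vnorm k (\<lambda>j. v j - w j)"
proof -
  define N where "N = spec_norm m k G"
  have N: "N > 0" using spec_norm_pos[OF nz] by (simp add: N_def)
  define u where "u = (\<lambda>j. v j - w j)"
  have key: "(sn_layer \<sigma> s (m,k,G,b) v i - sn_layer \<sigma> s (m,k,G,b) w i)^2 \<le> (matvec m k G u i / N)^2" for i
  proof (cases "i < m")
    case True
    have eq: "(\<Sum>j<k. G i j / (s * N) * v j) - (\<Sum>j<k. G i j / (s * N) * w j) = matvec m k G u i / (s * N)"
    proof -
      have "(\<Sum>j<k. G i j / (s * N) * v j) - (\<Sum>j<k. G i j / (s * N) * w j) = (\<Sum>j<k. G i j / (s * N) * (v j - w j))"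
        by (simp add: sum_subtractf[symmetric] right_diff_distrib)
      also have "\<dots> = (\<Sum>j<k. G i j * (v j - w j)) / (s * N)"
        by (simp add: sum_divide_distrib)
      finally show ?thesis using True by (simp add: matvec_def u_def)
    qed
    have "\<bar>sn_layer \<sigma> s (m,k,G,b) v i - sn_layer \<sigma> s (m,k,G,b) w i\<bar>
        = \<bar>\<sigma> ((\<Sum>j<k. G i j / (s * N) * v j) + b i) - \<sigma> ((\<Sum>j<k. G i j / (s * N) * w j) + b i)\<bar>"
      using True by (simp add: sn_layer_def N_def)
    also have "\<dots> \<le> s * \<bar>(\<Sum>j<k. G i j / (s * N) * v j) - (\<Sum>j<k. G i j / (s * N) * w j)\<bar>"
      using lip[of "(\<Sum>j<k. G i j / (s * N) * v j) + b i" "(\<Sum>j<k. G i j / (s * N) * w j) + b i"] by simp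
    also have "\<dots> = \<bar>matvec m k G u i / N\<bar>" unfolding eq using s N by (simp add: abs_divide abs_mult)
    finally have h: "\<bar>sn_layer \<sigma> s (m,k,G,b) v i - sn_layer \<sigma> s (m,k,G,b) w i\<bar> \<le> \<bar>matvec m k G u i / N\<bar>" .
    have "\<bar>sn_layer \<sigma> s (m,k,G,b) v i - sn_layer \<sigma> s (m,k,G,b) w i\<bar>^2 \<le> \<bar>matvec m k G u i / N\<bar>^2"
      by (rule power_mono[OF h]) simp
    thus ?thesis by (simp only: power2_abs)
  next
    case False thus ?thesis by (simp add: sn_layer_def)
  qed
  have "(\<Sum>i<m. (sn_layer \<sigma> s (m,k,G,b) v i - sn_layer \<sigma> s (m,k,G,b) w i)^2) \<le> (\<Sum>i<m. (matvec m k G u i / N)^2)"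
    by (intro sum_mono key)
  also have "\<dots> = (\<Sum>i<m. (matvec m k G u i)^2) / N^2"
    by (simp add: power_divide sum_divide_distrib)
  finally have "vnorm m (\<lambda>i. sn_layer \<sigma> s (m,k,G,b) v i - sn_layer \<sigma> s (m,k,G,b) w i) \<le> sqrt ((\<Sum>i<m. (matvec m k G u i)^2) / N^2)"
    unfolding vnorm_def by (rule real_sqrt_le_mono)
  also have "\<dots> = vnorm m (matvec m k G u) / N" using N by (simp add: vnorm_def real_sqrt_divide)
  also have "\<dots> \<le> vnorm k u" using spec_norm_bound[of m k G u] N by (simp add: N_def divide_le_eq mult.commute)
  finally show ?thesis by (simp add: u_def)
qed

definition chainok :: "layer list \<Rightarrow> bool" where
  "chainok Ls \<longleftrightarrow> (\<forall>i. Suc i < length Ls \<longrightarrow> fst (snd (Ls ! Suc i)) = fst (Ls ! i))"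

lemma net_lip:
  fixes \<sigma> :: "real \<Rightarrow> real"
  assumes s: "s > 0" and lip: "\<And>a b. \<bar>\<sigma> a - \<sigma> b\<bar> \<le> s * \<bar>a - b\<bar>"
  shows "Ls \<noteq> [] \<Longrightarrow> chainok Ls \<Longrightarrow> (\<forall>L\<in>set Ls. case L of (m, k, G, b) \<Rightarrow> nonzero_mat m k G) \<Longrightarrow>
    vnorm (fst (last Ls)) (\<lambda>i. net_apply \<sigma> s Ls v i - net_apply \<sigma> s Ls w i) \<le> vnorm (fst (snd (hd Ls))) (\<lambda>j. v j - w j)"
proof (induction Ls arbitrary: v w)
  case Nil thus ?case by simp
next
  case (Cons L Ls)
  obtain m k G b where L: "L = (m,k,G,b)" by (cases L) auto
  have nzL: "nonzero_mat m k G" using Cons.prems(3) L by auto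
  show ?case
  proof (cases "Ls = []")
    case True
    thus ?thesis using layer_lip[OF s lip nzL] L by simp
  next
    case False
    have ch: "chainok Ls" unfolding chainok_def
    proof (intro allI impI)
      fix i assume "Suc i < length Ls"
      thus "fst (snd (Ls ! Suc i)) = fst (Ls ! i)"
        using Cons.prems(2) unfolding chainok_def by (auto dest: spec[of _ "Suc i"])
    qed
    have "fst (snd ((L#Ls) ! Suc 0)) = fst ((L#Ls) ! 0)"
      using Cons.prems(2) False unfolding chainok_def by (auto dest: spec[of _ 0])
    hence h0: "fst (snd (hd Ls)) = m" using False L by (simp add: hd_conv_nth)
    have "vnorm (fst (last (L # Ls))) (\<lambda>i. net_apply \<sigma> s (L # Ls) v i - net_apply \<sigma> s (L # Ls) w i)
        = vnorm (fst (last Ls)) (\<lambda>i. net_apply \<sigma> s Ls (sn_layer \<sigma> s L v) i - net_apply \<sigma> s Ls (sn_layer \<sigma> s L w) i)"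
      using False by simp
    also have "\<dots> \<le> vnorm m (\<lambda>i. sn_layer \<sigma> s L v i - sn_layer \<sigma> s L w i)"
      using Cons.IH[OF False ch] Cons.prems(3) h0 by simp
    also have "\<dots> \<le> vnorm k (\<lambda>j. v j - w j)" unfolding L by (rule layer_lip[OF s lip nzL])
    finally show ?thesis using L by simp
  qed
qed

lemma layer_diff:
  fixes \<sigma> :: "real \<Rightarrow> real" and g :: "'a::real_normed_vector \<Rightarrow> nat \<Rightarrow> real"
  assumes sd: "\<forall>t. \<sigma> differentiable (at t)" and gd: "\<forall>i. (\<lambda>x. g x i) differentiable (at x0)"
  shows "\<forall>i. (\<lambda>x. sn_layer \<sigma> s L (g x) i) differentiable (at x0)"
proof
  fix i
  obtain m k G b where L: "L = (m,k,G,b)" by (cases L) auto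
  show "(\<lambda>x. sn_layer \<sigma> s L (g x) i) differentiable (at x0)"
  proof (cases "i < m")
    case True
    define h where "h = (\<lambda>x. (\<Sum>j<k. (G i j / (s * spec_norm m k G)) * g x j) + b i)"
    have hd: "h differentiable (at x0)"
    proof -
      have "\<And>j. (\<lambda>x. (G i j / (s * spec_norm m k G)) * g x j) differentiable (at x0)"
        using gd by (intro differentiable_mult differentiable_const) auto
      thus ?thesis unfolding h_def by (intro differentiable_add differentiable_sum differentiable_const) auto
    qed
    have "(\<sigma> \<circ> h) differentiable (at x0)" using differentiable_chain_at[OF hd] sd by blast
    moreover have "(\<lambda>x. sn_layer \<sigma> s L (g x) i) = \<sigma> \<circ> h"
      using True by (simp add: L sn_layer_def h_def fun_eq_iff)
    ultimately show ?thesis by simp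
  next
    case False
    hence "(\<lambda>x. sn_layer \<sigma> s L (g x) i) = (\<lambda>x. 0)" by (simp add: L sn_layer_def fun_eq_iff)
    thus ?thesis by simp
  qed
qed

lemma net_diff:
  fixes \<sigma> :: "real \<Rightarrow> real" and g :: "'a::real_normed_vector \<Rightarrow> nat \<Rightarrow> real"
  assumes sd: "\<forall>t. \<sigma> differentiable (at t)"
  shows "\<forall>i. (\<lambda>x. g x i) differentiable (at x0) \<Longrightarrow> \<forall>i. (\<lambda>x. net_apply \<sigma> s Ls (g x) i) differentiable (at x0)"
proof (induction Ls arbitrary: g)
  case Nil thus ?case by simp
next
  case (Cons L Ls)
  have "\<forall>i. (\<lambda>x. net_apply \<sigma> s Ls (sn_layer \<sigma> s L (g x)) i) differentiable (at x0)"
    using Cons.IH[of "\<lambda>x. sn_layer \<sigma> s L (g x)"] layer_diff[OF sd Cons.prems] by blast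
  thus ?case by simp
qed

lemma coord_bij: "bij_betw (coord :: nat \<Rightarrow> 'd::finite) {..<CARD('d)} UNIV"
proof -
  have "\<exists>f. bij_betw f {..<CARD('d)} (UNIV :: 'd set)"
    by (rule finite_same_card_bij) auto
  thus ?thesis unfolding coord_def by (rule someI_ex)
qed

lemma sum_coord: "(\<Sum>j\<in>(UNIV :: 'd::finite set). f j) = (\<Sum>i<CARD('d). f (coord i))"
  using sum.reindex_bij_betw[OF coord_bij, of f] by simp

lemma inv_coord: "i < CARD('d::finite) \<Longrightarrow> inv_into {..<CARD('d)} (coord :: nat \<Rightarrow> 'd) (coord i) = i"
  using bij_betw_inv_into_left[OF coord_bij] by auto

lemma norm_vec_sq: "(norm (x :: real ^ 'n))^2 = (\<Sum>j\<in>UNIV. (x $ j)^2)"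
  by (simp add: norm_vec_def L2_set_def sum_nonneg)

lemma norm_of_fun: "norm (of_fun u - of_fun u' :: real ^ 'd::finite) = vnorm CARD('d) (\<lambda>i. u i - u' i)"
proof -
  have "(norm (of_fun u - of_fun u' :: real ^ 'd))^2 = (\<Sum>i<CARD('d). (u i - u' i)^2)"
    unfolding norm_vec_sq sum_coord by (intro sum.cong) (auto simp: of_fun_def inv_coord)
  hence "norm (of_fun u - of_fun u' :: real ^ 'd) = sqrt (\<Sum>i<CARD('d). (u i - u' i)^2)"
    by (metis norm_ge_zero real_sqrt_unique)
  thus ?thesis by (simp add: vnorm_def)
qed

lemma vnorm_to_fun: "vnorm CARD('d::finite) (\<lambda>i. to_fun x i - to_fun y i) = norm (x - y :: real ^ 'd)"
proof -
  have "(norm (x - y :: real ^ 'd))^2 = (\<Sum>i<CARD('d). (to_fun x i - to_fun y i)^2)"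
    unfolding norm_vec_sq sum_coord by (intro sum.cong) (auto simp: to_fun_def)
  hence "norm (x - y) = sqrt (\<Sum>i<CARD('d). (to_fun x i - to_fun y i)^2)"
    by (metis norm_ge_zero real_sqrt_unique)
  thus ?thesis by (simp add: vnorm_def)
qed

lemma Ftilde_diff:
  fixes \<sigma> :: "real \<Rightarrow> real"
  assumes sd: "\<forall>t. \<sigma> differentiable (at t)"
  shows "(Ftilde \<sigma> s Ls :: real ^ 'd::finite \<Rightarrow> _) differentiable (at x0)"
proof -
  have td: "\<forall>i. (\<lambda>x::real^'d. to_fun x i) differentiable (at x0)"
  proof
    fix i
    show "(\<lambda>x::real^'d. to_fun x i) differentiable (at x0)"
    proof (cases "i < CARD('d)")
      case True
      hence "(\<lambda>x::real^'d. to_fun x i) = (\<lambda>x. x $ coord i)" by (simp add: to_fun_def fun_eq_iff)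
      thus ?thesis using bounded_linear_imp_differentiable[OF bounded_linear_vec_nth] by simp
    next
      case False
      hence "(\<lambda>x::real^'d. to_fun x i) = (\<lambda>x. 0)" by (simp add: to_fun_def fun_eq_iff)
      thus ?thesis by simp
    qed
  qed
  have nd: "\<forall>i. (\<lambda>x::real^'d. net_apply \<sigma> s Ls (to_fun x) i) differentiable (at x0)"
    by (rule net_diff[OF sd td])
  have eq: "Ftilde \<sigma> s Ls = (\<lambda>x::real^'d. \<Sum>j\<in>UNIV. net_apply \<sigma> s Ls (to_fun x) (inv_into {..<CARD('d)} coord j) *\<^sub>R axis j 1)"
    by (auto simp: fun_eq_iff Ftilde_def of_fun_def vec_eq_iff sum_component axis_def if_distrib cong: if_cong)
  show ?thesis unfolding eq
    using nd by (intro differentiable_sum differentiable_scaleR differentiable_const) auto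
qed


lemma deriv_lip:
  fixes f :: "'a::real_normed_vector \<Rightarrow> 'b::real_normed_vector"
  assumes fd: "(f has_derivative D) (at x)" and lip: "\<And>y. norm (f y - f x) \<le> norm (y - x)"
  shows "norm (D h) \<le> norm h"
proof (rule ccontr)
  assume "\<not> ?thesis"
  hence gt: "norm (D h) > norm h" by simp
  have bl: "bounded_linear D" using fd by (simp add: has_derivative_at_alt)
  have "h \<noteq> 0" using gt bl by (auto simp: linear_simps)
  hence hp: "norm h > 0" by simp
  define e where "e = (norm (D h) - norm h) / (2 * norm h)"
  have e: "e > 0" using gt hp by (simp add: e_def)
  obtain d where d: "d > 0" "\<And>y. norm (y - x) < d \<Longrightarrow> norm (f y - f x - D (y - x)) \<le> e * norm (y - x)"
    using fd e unfolding has_derivative_at_alt by blast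
  define t where "t = d / (2 * norm h)"
  have t: "t > 0" using d hp by (simp add: t_def)
  define y where "y = x + t *\<^sub>R h"
  have nyx: "norm (y - x) = t * norm h" using t by (simp add: y_def)
  have "norm (y - x) < d" using nyx hp d by (simp add: t_def)
  hence "norm (f y - f x - D (y - x)) \<le> e * norm (y - x)" using d(2) by blast
  moreover have "y - x = t *\<^sub>R h" by (simp add: y_def)
  ultimately have a: "norm (f y - f x - D (t *\<^sub>R h)) \<le> e * (t * norm h)" using t by simp
  have Dt: "D (t *\<^sub>R h) = t *\<^sub>R D h" using bl by (simp add: linear_simps)
  have "t * norm (D h) = norm (D (t *\<^sub>R h))" using t Dt by simp
  also have "\<dots> \<le> norm (f y - f x) + norm (f y - f x - D (t *\<^sub>R h))"
    using norm_triangle_ineq4[of "f y - f x" "f y - f x - D (t *\<^sub>R h)"] by simp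
  also have "\<dots> \<le> t * norm h + e * (t * norm h)" using lip[of y] nyx a by linarith
  finally have "t * norm (D h) \<le> t * (norm h + e * norm h)" by (simp add: algebra_simps)
  hence "norm (D h) \<le> norm h + e * norm h" using t by simp
  also have "\<dots> = norm h + (norm (D h) - norm h) / 2" using hp by (simp add: e_def)
  finally have "norm (D h) \<le> norm h + (norm (D h) - norm h) / 2" .
  hence "norm (D h) \<le> norm h" by (simp add: field_simps)
  thus False using gt by simp
qed

lemma eig_bound:
  fixes F' Dm :: "real^'n \<Rightarrow> real^'n"
  assumes lin: "linear F'" and FD: "\<And>h. F' h = c *\<^sub>R h + r *\<^sub>R Dm h"
    and Db: "\<And>h. norm (Dm h) \<le> norm h" and r: "r \<ge> 0" and ev: "is_eigenvalue (matrix F') \<mu>"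
  shows "cmod (\<mu> - complex_of_real c) \<le> r"
proof -
  obtain v :: "complex^'n" where v0: "v \<noteq> 0" and eq: "(\<chi> i j. complex_of_real (matrix F' $ i $ j)) *v v = \<mu> *s v"
    using ev unfolding is_eigenvalue_def by blast
  define a where "a = (\<chi> i. Re (v $ i))"
  define b where "b = (\<chi> i. Im (v $ i))"
  have vi: "v $ i = complex_of_real (a $ i) + \<i> * complex_of_real (b $ i)" for i
    by (simp add: a_def b_def complex_eq_iff)
  have mw: "matrix F' *v x = F' x" for x using matrix_works lin linear_matrix_vector_mul_eq by blast
  have comp: "((\<chi> i j. complex_of_real (matrix F' $ i $ j)) *v v) $ i
      = complex_of_real (F' a $ i) + \<i> * complex_of_real (F' b $ i)" for i
  proof -
    have Fa: "F' a $ i = (\<Sum>j\<in>UNIV. matrix F' $ i $ j * a $ j)"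
      using mw[of a] by (simp add: matrix_vector_mult_def vec_eq_iff)
    have Fb: "F' b $ i = (\<Sum>j\<in>UNIV. matrix F' $ i $ j * b $ j)"
      using mw[of b] by (simp add: matrix_vector_mult_def vec_eq_iff)
    have "((\<chi> i j. complex_of_real (matrix F' $ i $ j)) *v v) $ i = (\<Sum>j\<in>UNIV. complex_of_real (matrix F' $ i $ j) * v $ j)"
      by (simp add: matrix_vector_mult_def)
    also have "\<dots> = (\<Sum>j\<in>UNIV. complex_of_real (matrix F' $ i $ j * a $ j) + \<i> * complex_of_real (matrix F' $ i $ j * b $ j))"
      by (intro sum.cong refl) (simp add: complex_eq_iff a_def b_def)
    also have "\<dots> = (\<Sum>j\<in>UNIV. complex_of_real (matrix F' $ i $ j * a $ j)) + \<i> * (\<Sum>j\<in>UNIV. complex_of_real (matrix F' $ i $ j * b $ j))"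
      by (simp only: sum.distrib sum_distrib_left)
    also have "\<dots> = complex_of_real (F' a $ i) + \<i> * complex_of_real (F' b $ i)"
      by (simp only: Fa Fb of_real_sum)
    finally show ?thesis .
  qed
  have key: "(\<mu> - complex_of_real c) * v $ i = complex_of_real (r * Dm a $ i) + \<i> * complex_of_real (r * Dm b $ i)" for i
  proof -
    have mv: "\<mu> * v $ i = complex_of_real (F' a $ i) + \<i> * complex_of_real (F' b $ i)"
      using comp[of i] eq by (simp add: vec_eq_iff)
    have "(\<mu> - complex_of_real c) * v $ i = \<mu> * v $ i - complex_of_real c * v $ i"
      by (rule left_diff_distrib)
    also have "\<dots> = complex_of_real (r * Dm a $ i) + \<i> * complex_of_real (r * Dm b $ i)"
      unfolding mv FD by (simp add: complex_eq_iff a_def b_def)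
    finally show ?thesis .
  qed
  have sq: "(cmod ((\<mu> - complex_of_real c) * v $ i))^2 = r^2 * ((Dm a $ i)^2 + (Dm b $ i)^2)" for i
  proof -
    have "(cmod ((\<mu> - complex_of_real c) * v $ i))^2 = (r * Dm a $ i)^2 + (r * Dm b $ i)^2"
      unfolding key cmod_power2 by simp
    thus ?thesis by (simp add: power_mult_distrib distrib_left)
  qed
  have vsq: "(cmod (v $ i))^2 = (a $ i)^2 + (b $ i)^2" for i
    unfolding cmod_power2 by (simp add: a_def b_def)
  define V where "V = (\<Sum>i\<in>UNIV. (cmod (v $ i))^2)"
  have Vpos: "V > 0"
  proof -
    obtain i where "v $ i \<noteq> 0" using v0 by (auto simp: vec_eq_iff)
    hence "0 < (cmod (v $ i))^2" by simp
    also have "\<dots> \<le> V" unfolding V_def by (rule member_le_sum) auto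
    finally show ?thesis .
  qed
  have "(cmod (\<mu> - complex_of_real c))^2 * V = (\<Sum>i\<in>UNIV. (cmod ((\<mu> - complex_of_real c) * v $ i))^2)"
  proof -
    have "(cmod (\<mu> - complex_of_real c))^2 * V = (\<Sum>i\<in>UNIV. (cmod (\<mu> - complex_of_real c))^2 * (cmod (v $ i))^2)"
      unfolding V_def by (rule sum_distrib_left)
    also have "\<dots> = (\<Sum>i\<in>UNIV. (cmod ((\<mu> - complex_of_real c) * v $ i))^2)"
      by (intro sum.cong refl) (simp only: norm_mult power_mult_distrib)
    finally show ?thesis .
  qed
  also have "\<dots> = r^2 * ((norm (Dm a))^2 + (norm (Dm b))^2)"
    unfolding sq norm_vec_sq by (simp only: sum_distrib_left[symmetric] sum.distrib)
  also have "\<dots> \<le> r^2 * ((norm a)^2 + (norm b)^2)"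
  proof -
    have "(norm (Dm a))^2 \<le> (norm a)^2" by (rule power_mono[OF Db]) simp
    moreover have "(norm (Dm b))^2 \<le> (norm b)^2" by (rule power_mono[OF Db]) simp
    ultimately have "(norm (Dm a))^2 + (norm (Dm b))^2 \<le> (norm a)^2 + (norm b)^2" by (rule add_mono)
    thus ?thesis by (rule mult_left_mono) simp
  qed
  also have "\<dots> = r^2 * V" unfolding V_def vsq norm_vec_sq by (simp add: sum.distrib)
  finally have "(cmod (\<mu> - complex_of_real c))^2 * V \<le> r^2 * V" .
  hence "(cmod (\<mu> - complex_of_real c))^2 \<le> r^2" using Vpos by (rule mult_right_le_imp_le)
  thus ?thesis using r power2_le_imp_le by blast
qed

lemma sigmoid_bounds: "0 < sigmoid t" "sigmoid t < 1"
proof -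
  have e: "exp (-t) > 0" by simp
  hence p: "1 + exp (-t) > 0" by linarith
  show "0 < sigmoid t" unfolding sigmoid_def using p by (rule divide_pos_pos[OF zero_less_one])
  show "sigmoid t < 1" unfolding sigmoid_def using e by (subst divide_less_eq_1_pos[OF p]) linarith
qed

lemma sinv_facts:
  fixes \<theta> u :: real
  assumes "0 \<le> \<theta>" "\<theta> \<le> 1" "0 < u" "u < 1"
  shows "stab_inv \<theta> (1 - u) < 0" "(1 - 2*\<theta>) * stab_inv \<theta> (1 - u) > -1"
proof -
  have den: "\<theta> * u - 1 < 0" using assms by (smt (verit) mult_left_le_one_le)
  have eq: "stab_inv \<theta> (1 - u) = u / (\<theta> * u - 1)" by (simp add: stab_inv_def)
  show a: "stab_inv \<theta> (1 - u) < 0" unfolding eq using den assms by (simp add: divide_pos_neg)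
  have "(1 - \<theta>) * u = u - \<theta> * u" by (simp add: algebra_simps)
  moreover have "-1 * (\<theta> * u - 1) = 1 - \<theta> * u" by simp
  ultimately have "(1 - \<theta>) * u < -1 * (\<theta> * u - 1)" using assms by linarith
  hence "(1 - \<theta>) * u / (\<theta> * u - 1) > -1" using neg_less_divide_eq[OF den] by simp
  hence "(1 - \<theta>) * (u / (\<theta> * u - 1)) > -1" by simp
  hence b: "(1 - \<theta>) * stab_inv \<theta> (1 - u) > -1" unfolding eq .
  have "\<theta> * stab_inv \<theta> (1 - u) \<le> 0" using a assms by (intro mult_nonneg_nonpos) auto
  thus "(1 - 2*\<theta>) * stab_inv \<theta> (1 - u) > -1" using b by (simp add: algebra_simps)
qed

lemma Pneg:
  fixes \<theta> x :: real
  assumes "x < 0" "(1 - 2*\<theta>) * x > -2"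
  shows "2*x + (1-2*\<theta>)*x^2 < 0"
proof -
  have "x * (2 + (1 - 2*\<theta>) * x) < 0" using assms by (intro mult_neg_pos) auto
  thus ?thesis by (simp add: algebra_simps power2_eq_square)
qed

lemma cr_facts:
  fixes \<theta> c r gc gL :: real
  assumes th: "0 \<le> \<theta>" "\<theta> \<le> 1" and c: "c = stab_inv \<theta> (1 - sigmoid gc)"
    and r: "r = max 0 (stab_inv \<theta> (1 - sigmoid gL) - c)"
  shows "r \<ge> 0" "c + r < 0" "2*(c-r) + (1-2*\<theta>)*(c-r)^2 < 0" "2*(c+r) + (1-2*\<theta>)*(c+r)^2 < 0"
proof -
  define aL where "aL = stab_inv \<theta> (1 - sigmoid gL)"
  have c1: "c < 0" "(1 - 2*\<theta>) * c > -1" using sinv_facts[OF th sigmoid_bounds] c by auto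
  have a1: "aL < 0" "(1 - 2*\<theta>) * aL > -1" using sinv_facts[OF th sigmoid_bounds] aL_def by auto
  show "r \<ge> 0" using r by simp
  have cr: "c + r = max c aL" using r aL_def by (auto simp: max_def)
  show "c + r < 0" using cr c1 a1 by simp
  show "2*(c+r) + (1-2*\<theta>)*(c+r)^2 < 0"
  proof (cases "c \<le> aL")
    case True thus ?thesis using cr a1 by (intro Pneg) auto
  next
    case False thus ?thesis using cr c1 by (intro Pneg) auto
  qed
  show "2*(c-r) + (1-2*\<theta>)*(c-r)^2 < 0"
  proof (cases "c \<le> aL")
    case False
    hence "r = 0" using r aL_def by auto
    thus ?thesis using c1 by (intro Pneg) auto
  next
    case True
    hence rr: "c - r = 2*c - aL" using r aL_def by auto
    have "(1 - 2*\<theta>) * (2*c - aL) > -2"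
    proof (cases "\<theta> \<le> 1/2")
      case True
      have "(1 - 2*\<theta>) * aL \<le> 0" using True a1 by (intro mult_nonneg_nonpos) auto
      thus ?thesis using c1 by (simp add: algebra_simps)
    next
      case False
      have "2*c - aL < 0" using True c1 by linarith
      hence "(1 - 2*\<theta>) * (2*c - aL) > 0" using False by (intro mult_neg_neg) auto
      thus ?thesis by linarith
    qed
    moreover have "2*c - aL < 0" using True c1 by linarith
    ultimately show ?thesis unfolding rr by (rule Pneg[rotated])
  qed
qed


lemma Ftilde_lip:
  fixes \<sigma> :: "real \<Rightarrow> real" and x y :: "real ^ 'd::finite"
  assumes s: "s > 0" and lip: "\<And>a b. \<bar>\<sigma> a - \<sigma> b\<bar> \<le> s * \<bar>a - b\<bar>" and wf: "wf_net CARD('d) Ls"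
  shows "norm (Ftilde \<sigma> s Ls x - Ftilde \<sigma> s Ls y) \<le> norm (x - y)"
proof -
  have ne: "Ls \<noteq> []" and h: "fst (snd (hd Ls)) = CARD('d)" and l: "fst (last Ls) = CARD('d)"
    and ch: "chainok Ls" and nz: "\<forall>L\<in>set Ls. case L of (m, k, G, b) \<Rightarrow> nonzero_mat m k G"
    using wf unfolding wf_net_def chainok_def by auto
  have "norm (Ftilde \<sigma> s Ls x - Ftilde \<sigma> s Ls y)
      = vnorm CARD('d) (\<lambda>i. net_apply \<sigma> s Ls (to_fun x) i - net_apply \<sigma> s Ls (to_fun y) i)"
    unfolding Ftilde_def by (rule norm_of_fun)
  also have "\<dots> \<le> vnorm CARD('d) (\<lambda>j. to_fun x j - to_fun y j)"
    using net_lip[OF s lip ne ch nz, of "to_fun x" "to_fun y"] h l by simp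
  also have "\<dots> = norm (x - y)" by (rule vnorm_to_fun)
  finally show ?thesis .
qed

theorem theorem1:
  fixes \<theta> :: real and \<sigma> :: "real \<Rightarrow> real" and Ls :: "layer list"
    and \<gamma>c \<gamma>L :: real
  assumes "0 \<le> \<theta>" "\<theta> \<le> 1"
    and "\<forall>t. \<sigma> differentiable (at t)"
    and "bdd_above (range (\<lambda>t. \<bar>deriv \<sigma> t\<bar>))"
    and "(SUP t. \<bar>deriv \<sigma> t\<bar>) > 0"
    and "wf_net CARD('d::finite) Ls"
  shows "let s = (SUP t. \<bar>deriv \<sigma> t\<bar>);
             c = stab_inv \<theta> (1 - sigmoid \<gamma>c);
             r = max 0 (stab_inv \<theta> (1 - sigmoid \<gamma>L) - c);
             F = (\<lambda>x :: real ^ 'd. c *\<^sub>R x + r *\<^sub>R Ftilde \<sigma> s Ls x)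
         in \<forall>x. F differentiable (at x) \<and>
              (\<forall>F'. (F has_derivative F') (at x) \<longrightarrow>
                 (\<forall>\<mu>. is_eigenvalue (matrix F') \<mu> \<longrightarrow> cmod (stab \<theta> \<mu>) < 1))"
proof -
  define s where "s = (SUP t. \<bar>deriv \<sigma> t\<bar>)"
  define c where "c = stab_inv \<theta> (1 - sigmoid \<gamma>c)"
  define r where "r = max 0 (stab_inv \<theta> (1 - sigmoid \<gamma>L) - c)"
  have sp: "s > 0" using assms(5) by (simp add: s_def)
  have lip: "\<And>a b. \<bar>\<sigma> a - \<sigma> b\<bar> \<le> s * \<bar>a - b\<bar>" unfolding s_def by (rule sigma_lip[OF assms(3,4)])
  note cr = cr_facts[OF assms(1,2) c_def r_def]
  have main: "((\<lambda>x :: real ^ 'd. c *\<^sub>R x + r *\<^sub>R Ftilde \<sigma> s Ls x) differentiable (at x)) \<and>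
              (\<forall>F'. ((\<lambda>x :: real ^ 'd. c *\<^sub>R x + r *\<^sub>R Ftilde \<sigma> s Ls x) has_derivative F') (at x) \<longrightarrow>
                 (\<forall>\<mu>. is_eigenvalue (matrix F') \<mu> \<longrightarrow> cmod (stab \<theta> \<mu>) < 1))" for x :: "real ^ 'd"
  proof -
    obtain D where FtD: "(Ftilde \<sigma> s Ls has_derivative D) (at x)"
      using Ftilde_diff[OF assms(3), of s Ls x] unfolding differentiable_def by blast
    have FD: "((\<lambda>x :: real ^ 'd. c *\<^sub>R x + r *\<^sub>R Ftilde \<sigma> s Ls x) has_derivative (\<lambda>h. c *\<^sub>R h + r *\<^sub>R D h)) (at x)"
      by (intro has_derivative_add has_derivative_scaleR_right has_derivative_ident FtD)
    have Db: "\<And>h. norm (D h) \<le> norm h"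
      using deriv_lip[OF FtD] Ftilde_lip[OF sp lip assms(6)] by blast
    show ?thesis
    proof (intro conjI allI impI)
      show "(\<lambda>x :: real ^ 'd. c *\<^sub>R x + r *\<^sub>R Ftilde \<sigma> s Ls x) differentiable (at x)"
        using FD unfolding differentiable_def by blast
    next
      fix F' \<mu>
      assume F'd: "((\<lambda>x :: real ^ 'd. c *\<^sub>R x + r *\<^sub>R Ftilde \<sigma> s Ls x) has_derivative F') (at x)"
        and ev: "is_eigenvalue (matrix F') \<mu>"
      have eqF: "F' = (\<lambda>h. c *\<^sub>R h + r *\<^sub>R D h)" using has_derivative_unique[OF F'd FD] .
      have lin: "linear F'" using F'd has_derivative_linear by blast
      have "cmod (\<mu> - complex_of_real c) \<le> r"
        by (rule eig_bound[OF lin _ Db cr(1) ev]) (simp add: eqF)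
      hence "(cmod (\<mu> - complex_of_real c))^2 \<le> r^2" using norm_ge_zero by (rule power_mono)
      hence "(Re \<mu> - c)^2 + (Im \<mu>)^2 \<le> r^2" by (simp add: cmod_power2)
      hence "2 * Re \<mu> + (1-2*\<theta>)*((Re \<mu>)^2 + (Im \<mu>)^2) < 0"
        using region_real[OF assms(1,2) _ cr(1,2,3,4)] by blast
      thus "cmod (stab \<theta> \<mu>) < 1" by (rule stab_lt1[OF assms(1,2)])
    qed
  qed
  show ?thesis unfolding Let_def s_def[symmetric] c_def[symmetric] r_def[symmetric] using main by blast
qed

end
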